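(* Let $A$ be any set and $C\subseteq A\times A$ (equivalently a map $C:A\times A\to\{0,1\}$). Then the diagonal set $z=\{b\in A\mid (b,b)\in C\}$ can be written as a (possibly infinite) union of (possibly infinite) intersections of subsets of $A$ that are rows $\{b\mid (a,b)\in C\}$ or columns $\{b\mid (b,a)\in C\}$ $(a\in A)$ of $C$. *)

theory Defs
  imports Main
begin

definition row_of :: "('a \<times> 'a) set \<Rightarrow> 'a \<Rightarrow> 'a set" where
  "row_of C a = {b. (a, b) \<in> C}"

definition col_of :: "('a \<times> 'a) set \<Rightarrow> 'a \<Rightarrow> 'a set" where
  "col_of C a = {b. (b, a) \<in> C}"

end

theory Submission
  imports Defs
begin

theorem lemma2p4:
  fixes A :: "'a set" and C :: "('a \<times> 'a) set"
  assumes "C \<subseteq> A \<times> A"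
  shows "\<exists>F :: 'a set set set.
           (\<forall>S\<in>F. \<forall>X\<in>S. \<exists>a\<in>A. X = row_of C a \<or> X = col_of C a) \<and>
           {b \<in> A. (b, b) \<in> C} = (\<Union>S\<in>F. \<Inter>S)"
proof -
  define S where "S b = {row_of C b} \<union> {row_of C c | c. c \<in> A \<and> (c,c) \<notin> C \<and> (c,b) \<in> C}
      \<union> {col_of C c | c. c \<in> A \<and> (c,c) \<notin> C \<and> (b,c) \<in> C}" for b
  define F where "F = S ` {b \<in> A. (b, b) \<in> C}"
  have 1: "\<forall>T\<in>F. \<forall>X\<in>T. \<exists>a\<in>A. X = row_of C a \<or> X = col_of C a"
    unfolding F_def S_def by auto
  have 2: "{b \<in> A. (b, b) \<in> C} \<subseteq> (\<Union>T\<in>F. \<Inter>T)"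
  proof
    fix b assume b: "b \<in> {b \<in> A. (b, b) \<in> C}"
    have "b \<in> \<Inter>(S b)" using b unfolding S_def row_of_def col_of_def by auto
    thus "b \<in> (\<Union>T\<in>F. \<Inter>T)" using b unfolding F_def by auto
  qed
  have 3: "(\<Union>T\<in>F. \<Inter>T) \<subseteq> {b \<in> A. (b, b) \<in> C}"
  proof
    fix x assume "x \<in> (\<Union>T\<in>F. \<Inter>T)"
    then obtain b where b: "b \<in> A" "(b,b) \<in> C" and x: "x \<in> \<Inter>(S b)"
      unfolding F_def by auto
    have "x \<in> row_of C b" using x unfolding S_def by auto
    hence xb: "(b,x) \<in> C" unfolding row_of_def by auto
    hence xA: "x \<in> A" using assms by auto
    show "x \<in> {b \<in> A. (b, b) \<in> C}"
    proof (rule ccontr)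
      assume nd: "x \<notin> {b \<in> A. (b, b) \<in> C}"
      hence "(x,x) \<notin> C" using xA by auto
      hence "col_of C x \<in> S b" using xA xb unfolding S_def by auto
      hence "x \<in> col_of C x" using x by auto
      thus False using \<open>(x,x) \<notin> C\<close> unfolding col_of_def by auto
    qed
  qed
  show ?thesis using 1 2 3 by blast
qed

end
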